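(* Let $\rho_n\in[\frac12,1]$, $\lambda_n\in\mathbb{R}$ and $u_n\in C^2(\overline\Omega)$ solve $-\Delta u_n+\lambda_nu_n=h_{\rho_n}(u_n)$ in $\Omega$, $\partial u_n/\partial\nu=0$ on $\partial\Omega$, $\int_\Omega u_n^2=c$. If $\lambda_n\to+\infty$, then $\|u_n\|_{L^\infty(\Omega)}\to+\infty$.
   Context: $\Omega\subset\mathbb{R}^N$ ($N\ge3$) smooth bounded domain, $c>0$; $2_*=2+\frac4N$, $2^*=\frac{2N}{N-2}$. $f$ satisfies $(f_1)$ $f\in C^1(\mathbb{R})$, $\lim_{|t|\to0}f(t)/t=0$; $(f_2)$ there exist $p\in(2_*,2^* )$, $a_0>0$ with $\lim_{|t|\to\infty}f(t)/(|t|^{p-2}t)=a_0$. Fix $R_0>0$ with $f(t)t>0$ for $|t|\ge R_0$ and a smooth cut-off $\eta$ with $\eta=1$ for $|t|\ge R_0+1$, $\eta=0$ for $|t|<R_0$, $|\eta'|\le2$; $f_1=\eta f$, $f_2=(1-\eta)f$, $h_\rho=\rho f_1+f_2$. *)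

theory Defs
  imports "HOL-Analysis.Analysis"
begin

fun Ck :: "nat \<Rightarrow> ('a::euclidean_space \<Rightarrow> real) \<Rightarrow> 'a set \<Rightarrow> bool" where
  "Ck 0 f S = continuous_on S f"
| "Ck (Suc k) f S = (continuous_on S f \<and> (\<forall>x\<in>S. f differentiable (at x)) \<and>
      (\<forall>i\<in>Basis. Ck k (\<lambda>x. frechet_derivative f (at x) i) S))"

definition smooth_on :: "('a::euclidean_space \<Rightarrow> real) \<Rightarrow> 'a set \<Rightarrow> bool" where
  "smooth_on f S \<longleftrightarrow> (\<forall>k. Ck k f S)"

definition grad :: "('a::euclidean_space \<Rightarrow> real) \<Rightarrow> 'a \<Rightarrow> 'a" where
  "grad f x = (\<Sum>i\<in>Basis. frechet_derivative f (at x) i *\<^sub>R i)"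

definition local_defining_function :: "'a::euclidean_space set \<Rightarrow> 'a \<Rightarrow> 'a set \<Rightarrow> ('a \<Rightarrow> real) \<Rightarrow> bool" where
  "local_defining_function \<Omega> x0 U \<phi> \<longleftrightarrow>
     open U \<and> x0 \<in> U \<and> smooth_on \<phi> U \<and> (\<forall>x\<in>U. grad \<phi> x \<noteq> 0) \<and>
     \<Omega> \<inter> U = {x\<in>U. \<phi> x < 0}"

definition smooth_bounded_domain :: "'a::euclidean_space set \<Rightarrow> bool" where
  "smooth_bounded_domain \<Omega> \<longleftrightarrow> open \<Omega> \<and> connected \<Omega> \<and> \<Omega> \<noteq> {} \<and> bounded \<Omega> \<and>
     (\<forall>x0\<in>frontier \<Omega>. \<exists>U \<phi>. local_defining_function \<Omega> x0 U \<phi>)"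

text \<open>Outward unit normal (independent of the chosen defining function).\<close>
definition outward_normal :: "'a::euclidean_space set \<Rightarrow> 'a \<Rightarrow> 'a" where
  "outward_normal \<Omega> x0 = (SOME n. \<exists>U \<phi>. local_defining_function \<Omega> x0 U \<phi> \<and>
       n = grad \<phi> x0 /\<^sub>R norm (grad \<phi> x0))"

definition C2_closure_with :: "'a::euclidean_space set \<Rightarrow> ('a \<Rightarrow> real) \<Rightarrow> ('a \<Rightarrow> 'a) \<Rightarrow> ('a \<Rightarrow> 'a \<Rightarrow> 'a) \<Rightarrow> bool" where
  "C2_closure_with \<Omega> u G H \<longleftrightarrow>
     (\<forall>x\<in>closure \<Omega>. (u has_derivative (\<lambda>v. G x \<bullet> v)) (at x within closure \<Omega>) \<and>
                     (G has_derivative H x) (at x within closure \<Omega>)) \<and>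
     (\<forall>v. continuous_on (closure \<Omega>) (\<lambda>x. H x v))"

definition laplacian_of :: "('a::euclidean_space \<Rightarrow> 'a \<Rightarrow> 'a) \<Rightarrow> 'a \<Rightarrow> real" where
  "laplacian_of H x = (\<Sum>i\<in>Basis. H x i \<bullet> i)"

end

theory Submission
  imports Defs
begin

lemma hess_max:
  fixes w :: "'a::euclidean_space \<Rightarrow> real"
  assumes S: "open S" "y \<in> S"
   and dw: "\<And>x. x\<in>S \<Longrightarrow> (w has_derivative (\<lambda>v. Gw x \<bullet> v)) (at x)"
   and dG: "(Gw has_derivative Hw) (at y)"
   and mx: "\<And>x. x\<in>S \<Longrightarrow> w x \<le> w y"
  shows "Hw i \<bullet> i \<le> 0"
proof (rule ccontr)
  assume "\<not> Hw i \<bullet> i \<le> 0"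
  hence apos: "Hw i \<bullet> i > 0" by simp
  hence i0: "i \<noteq> 0" using has_derivative_bounded_linear[OF dG]
    by (metis bounded_linear.linear inner_zero_left less_irrefl linear_0)
  have "(\<lambda>v. Gw y \<bullet> v) = (\<lambda>v. 0)"
    using differential_zero_maxmin[OF S(2) S(1) dw[OF S(2)]] mx by blast
  hence Gy: "Gw y = 0" by (metis inner_eq_zero_iff)
  have lin: "linear Hw" using has_derivative_bounded_linear[OF dG] bounded_linear.linear by blast
  define \<phi> where "\<phi> t = Gw (y + t *\<^sub>R i) \<bullet> i" for t
  have d1: "((\<lambda>t. y + t *\<^sub>R i) has_derivative (\<lambda>t. t *\<^sub>R i)) (at 0)"
    by (auto intro!: derivative_eq_intros)
  have "((\<lambda>t. Gw (y + t *\<^sub>R i)) has_derivative (\<lambda>t. Hw (t *\<^sub>R i))) (at 0)"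
    using has_derivative_compose[OF d1, of Gw Hw] dG by (simp add: o_def)
  hence "(\<phi> has_derivative (\<lambda>t. Hw (t *\<^sub>R i) \<bullet> i)) (at 0)"
    unfolding \<phi>_def by (auto intro!: derivative_eq_intros)
  moreover have "(\<lambda>t. Hw (t *\<^sub>R i) \<bullet> i) = (\<lambda>t. (Hw i \<bullet> i) * t)"
    using lin by (auto simp: linear_scale)
  ultimately have "DERIV \<phi> 0 :> (Hw i \<bullet> i)"
    by (simp add: has_field_derivative_def)
  from DERIV_pos_inc_right[OF this apos] obtain d where d: "d > 0"
    "\<And>h. h > 0 \<Longrightarrow> h < d \<Longrightarrow> \<phi> 0 < \<phi> h" by auto
  obtain e where e: "e > 0" "ball y e \<subseteq> S" using S open_contains_ball by blast
  define h where "h = min d (e / norm i) / 2"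
  have hpos: "h > 0" using d e i0 by (simp add: h_def)
  have hd: "h < d" using d e i0 by (simp add: h_def)
  have he: "h * norm i < e" using d e i0 hpos
  proof -
    have "h \<le> (e / norm i) / 2" by (simp add: h_def)
    hence "h * norm i \<le> (e / norm i) / 2 * norm i" using i0 by (intro mult_right_mono) auto
    also have "\<dots> = e / 2" using i0 by simp
    finally show ?thesis using e by simp
  qed
  have inS: "y + t *\<^sub>R i \<in> S" if "0 \<le> t" "t \<le> h" for t
  proof -
    have "norm (t *\<^sub>R i) \<le> h * norm i" using that by (simp add: mult_right_mono)
    hence "dist y (y + t *\<^sub>R i) < e" using he by (simp add: dist_norm)
    thus ?thesis using e by auto
  qed
  have der: "DERIV (\<lambda>t. w (y + t *\<^sub>R i)) t :> \<phi> t" if "0 \<le> t" "t \<le> h" for t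
  proof -
    have d2: "((\<lambda>t. y + t *\<^sub>R i) has_derivative (\<lambda>s. s *\<^sub>R i)) (at t)"
      by (auto intro!: derivative_eq_intros)
    have "((\<lambda>t. w (y + t *\<^sub>R i)) has_derivative (\<lambda>s. Gw (y + t *\<^sub>R i) \<bullet> (s *\<^sub>R i))) (at t)"
      using has_derivative_compose[OF d2 dw[OF inS[OF that]]] by (simp add: o_def)
    thus ?thesis unfolding has_field_derivative_def \<phi>_def by (simp add: mult.commute[of _ "Gw _ \<bullet> _"])
  qed
  from MVT2[OF hpos der] obtain z where z: "0 < z" "z < h"
    "w (y + h *\<^sub>R i) - w (y + 0 *\<^sub>R i) = (h - 0) * \<phi> z" by auto
  have "\<phi> 0 = 0" by (simp add: \<phi>_def Gy)
  hence "\<phi> z > 0" using d(2)[of z] z hd by simp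
  hence "w (y + h *\<^sub>R i) > w y" using z(3) mult_pos_pos[OF hpos \<open>\<phi> z > 0\<close>] by simp
  thus False using mx[OF inS[of h]] hpos by simp
qed

lemma One_Basis: "i \<in> Basis \<Longrightarrow> One \<bullet> i = 1"
  by (simp add: inner_sum_left inner_Basis sum.delta)

lemma mem_cube:
  "y \<in> cbox (x0 - r *\<^sub>R One) (x0 + r *\<^sub>R One) \<longleftrightarrow> (\<forall>i\<in>Basis. \<bar>(y - x0) \<bullet> i\<bar> \<le> r)"
  by (auto simp: mem_box inner_simps One_Basis abs_le_iff)

lemma mem_ocube:
  "y \<in> box (x0 - r *\<^sub>R One) (x0 + r *\<^sub>R One) \<longleftrightarrow> (\<forall>i\<in>Basis. \<bar>(y - x0) \<bullet> i\<bar> < r)"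
  by (auto simp: mem_box inner_simps One_Basis abs_less_iff)

lemma coord_sum: "j \<in> Basis \<Longrightarrow> (\<Sum>i\<in>Basis. f i *\<^sub>R i) \<bullet> j = (f j :: real)"
proof -
  assume j: "j \<in> Basis"
  have "(\<Sum>i\<in>Basis. f i *\<^sub>R i) \<bullet> j = (\<Sum>i\<in>Basis. f i * (i \<bullet> j))" by (simp add: inner_sum_left)
  also have "\<dots> = (\<Sum>i\<in>Basis. if i = j then f j else 0)"
    using j by (intro sum.cong) (auto simp: inner_Basis)
  also have "\<dots> = f j" using j by simp
  finally show ?thesis .
qed

lemma dcosh: "(cosh has_real_derivative sinh t) (at t)"
  unfolding sinh_def cosh_def by (auto intro!: derivative_eq_intros)
lemma dsinh: "(sinh has_real_derivative cosh t) (at t)"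
  unfolding sinh_def cosh_def by (auto intro!: derivative_eq_intros)

lemma comp_real:
  fixes x0 y i :: "'a::euclidean_space"
  assumes "(g has_real_derivative D) (at (k * ((y - x0) \<bullet> i)))"
  shows "((\<lambda>x. g (k * ((x - x0) \<bullet> i))) has_derivative (\<lambda>v. D * (k * (v \<bullet> i)))) (at y)"
proof -
  have d: "((\<lambda>x. k * ((x - x0) \<bullet> i)) has_derivative (\<lambda>v. k * (v \<bullet> i))) (at y)"
    by (auto intro!: derivative_eq_intros)
  show ?thesis using has_derivative_compose[OF d assms[unfolded has_field_derivative_def]]
    by (simp add: o_def)
qed

lemma barrier_d1:
  fixes x0 :: "'a::euclidean_space"
  shows "((\<lambda>y. C * (\<Sum>i\<in>Basis. cosh (k * ((y - x0) \<bullet> i)))) has_derivative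
     (\<lambda>v. (\<Sum>i\<in>Basis. (C * k * sinh (k * ((y - x0) \<bullet> i))) *\<^sub>R i) \<bullet> v)) (at y)"
proof -
  have "((\<lambda>y. C * (\<Sum>i\<in>Basis. cosh (k * ((y - x0) \<bullet> i)))) has_derivative
     (\<lambda>v. C * (\<Sum>i\<in>Basis. sinh (k * ((y - x0) \<bullet> i)) * (k * (v \<bullet> i))))) (at y)"
    by (auto intro!: derivative_eq_intros comp_real dcosh)
  moreover have "(\<lambda>v. C * (\<Sum>i\<in>Basis. sinh (k * ((y - x0) \<bullet> i)) * (k * (v \<bullet> i)))) =
     (\<lambda>v. (\<Sum>i\<in>Basis. (C * k * sinh (k * ((y - x0) \<bullet> i))) *\<^sub>R i) \<bullet> v)"
  proof
    fix v :: 'a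
    have "(\<Sum>i\<in>Basis. (C * k * sinh (k * ((y - x0) \<bullet> i))) *\<^sub>R i) \<bullet> v
       = (\<Sum>i\<in>Basis. (C * k * sinh (k * ((y - x0) \<bullet> i))) * (i \<bullet> v))"
      by (simp add: inner_sum_left)
    also have "\<dots> = C * (\<Sum>i\<in>Basis. sinh (k * ((y - x0) \<bullet> i)) * (k * (v \<bullet> i)))"
      by (simp add: sum_distrib_left inner_commute mult_ac)
    finally show "C * (\<Sum>i\<in>Basis. sinh (k * ((y - x0) \<bullet> i)) * (k * (v \<bullet> i))) =
     (\<Sum>i\<in>Basis. (C * k * sinh (k * ((y - x0) \<bullet> i))) *\<^sub>R i) \<bullet> v" by simp
  qed
  ultimately show ?thesis by simp
qed

lemma barrier_d2:
  fixes x0 :: "'a::euclidean_space"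
  shows "((\<lambda>y. \<Sum>i\<in>Basis. (C * k * sinh (k * ((y - x0) \<bullet> i))) *\<^sub>R i) has_derivative
     (\<lambda>v. \<Sum>i\<in>Basis. (C * k\<^sup>2 * cosh (k * ((y - x0) \<bullet> i)) * (v \<bullet> i)) *\<^sub>R i)) (at y)"
proof -
  have "((\<lambda>y. \<Sum>i\<in>Basis. (C * k * sinh (k * ((y - x0) \<bullet> i))) *\<^sub>R i) has_derivative
     (\<lambda>v. \<Sum>i\<in>Basis. (C * k * (cosh (k * ((y - x0) \<bullet> i)) * (k * (v \<bullet> i)))) *\<^sub>R i)) (at y)"
    by (auto intro!: derivative_eq_intros comp_real dsinh)
  moreover have "(\<lambda>v. \<Sum>i\<in>Basis. (C * k * (cosh (k * ((y - x0) \<bullet> i)) * (k * (v \<bullet> i)))) *\<^sub>R i) =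
     (\<lambda>v. \<Sum>i\<in>Basis. (C * k\<^sup>2 * cosh (k * ((y - x0) \<bullet> i)) * (v \<bullet> i)) *\<^sub>R i)"
    by (auto simp: power2_eq_square mult_ac intro!: sum.cong)
  ultimately show ?thesis by simp
qed

lemma barrier_lap:
  fixes x0 :: "'a::euclidean_space"
  shows "(\<Sum>j\<in>Basis. (\<Sum>i\<in>Basis. (C * k\<^sup>2 * cosh (k * ((y - x0) \<bullet> i)) * (j \<bullet> i)) *\<^sub>R i) \<bullet> j)
     = k\<^sup>2 * (C * (\<Sum>i\<in>Basis. cosh (k * ((y - x0) \<bullet> i))))"
  by (simp add: coord_sum sum_distrib_left inner_Basis mult_ac)

lemma comparison:
  fixes z :: "'a::euclidean_space \<Rightarrow> real"
  assumes S: "open S" and r: "r > 0" and k: "k > 0" and Z: "Z \<ge> 0"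
   and cube: "cbox (x0 - r *\<^sub>R One) (x0 + r *\<^sub>R One) \<subseteq> S"
   and dz: "\<And>y. y\<in>S \<Longrightarrow> (z has_derivative (\<lambda>v. G y \<bullet> v)) (at y)"
   and dG: "\<And>y. y\<in>S \<Longrightarrow> (G has_derivative H y) (at y)"
   and zle: "\<And>y. y\<in>S \<Longrightarrow> z y \<le> Z"
   and lap: "\<And>y. y\<in>S \<Longrightarrow> z y > 0 \<Longrightarrow> laplacian_of H y \<ge> k\<^sup>2 * z y"
  shows "z x0 \<le> Z * DIM('a) / cosh (k * r)"
proof -
  define Q where "Q = cbox (x0 - r *\<^sub>R One) (x0 + r *\<^sub>R One)"
  define C where "C = Z / cosh (k * r)"
  have C0: "C \<ge> 0" using Z by (simp add: C_def)
  define \<psi> where "\<psi> y = C * (\<Sum>i\<in>Basis. cosh (k * ((y - x0) \<bullet> i)))" for y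
  define G\<psi> where "G\<psi> y = (\<Sum>i\<in>Basis. (C * k * sinh (k * ((y - x0) \<bullet> i))) *\<^sub>R i)" for y
  define H\<psi> where "H\<psi> y = (\<lambda>v. \<Sum>i\<in>Basis. (C * k\<^sup>2 * cosh (k * ((y - x0) \<bullet> i)) * (v \<bullet> i)) *\<^sub>R i)" for y
  have d\<psi>: "(\<psi> has_derivative (\<lambda>v. G\<psi> y \<bullet> v)) (at y)" for y
    unfolding \<psi>_def G\<psi>_def by (rule barrier_d1)
  have dG\<psi>: "(G\<psi> has_derivative H\<psi> y) (at y)" for y
    unfolding H\<psi>_def G\<psi>_def by (rule barrier_d2)
  have lap\<psi>: "laplacian_of H\<psi> y = k\<^sup>2 * \<psi> y" for y
    unfolding laplacian_of_def H\<psi>_def \<psi>_def by (rule barrier_lap)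
  have \<psi>0: "\<psi> y \<ge> 0" for y
    unfolding \<psi>_def using C0 by (auto intro!: mult_nonneg_nonneg sum_nonneg order.trans[OF zero_le_one cosh_real_ge_1])
  define w where "w y = z y - \<psi> y" for y
  have dw: "(w has_derivative (\<lambda>v. (G y - G\<psi> y) \<bullet> v)) (at y)" if "y \<in> S" for y
    unfolding w_def using dz[OF that] d\<psi>[of y] by (auto intro!: derivative_eq_intros simp: inner_diff_left)
  have dGw: "((\<lambda>y. G y - G\<psi> y) has_derivative (\<lambda>v. H y v - H\<psi> y v)) (at y)" if "y \<in> S" for y
    using dG[OF that] dG\<psi>[of y] by (auto intro!: derivative_eq_intros)
  have contw: "continuous_on Q w"
    using cube unfolding Q_def
    by (intro continuous_at_imp_continuous_on ballI has_derivative_continuous[OF dw]) auto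
  have x0Q: "x0 \<in> Q" unfolding Q_def mem_cube using r by simp
  obtain ym where ym: "ym \<in> Q" "\<And>y. y \<in> Q \<Longrightarrow> w y \<le> w ym"
    using continuous_attains_sup[OF _ _ contw] x0Q unfolding Q_def by (metis compact_cbox empty_iff)
  have "w x0 \<le> 0"
  proof (rule ccontr)
    assume "\<not> w x0 \<le> 0"
    hence wpos: "w ym > 0" using ym x0Q by force
    have inbox: "ym \<in> box (x0 - r *\<^sub>R One) (x0 + r *\<^sub>R One)"
    proof (rule ccontr)
      assume "ym \<notin> box (x0 - r *\<^sub>R One) (x0 + r *\<^sub>R One)"
      then obtain j where j: "j \<in> Basis" "\<not> \<bar>(ym - x0) \<bullet> j\<bar> < r" unfolding mem_ocube by auto
      hence "\<bar>(ym - x0) \<bullet> j\<bar> = r" using ym(1) unfolding Q_def mem_cube by force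
      hence "cosh (k * ((ym - x0) \<bullet> j)) = cosh (k * r)"
        by (metis abs_if cosh_minus mult_minus_right)
      moreover have "cosh (k * ((ym - x0) \<bullet> j)) \<le> (\<Sum>i\<in>Basis. cosh (k * ((ym - x0) \<bullet> i)))"
        using j(1) by (intro member_le_sum) (auto intro: order.trans[OF zero_le_one cosh_real_ge_1])
      ultimately have "\<psi> ym \<ge> C * cosh (k * r)" unfolding \<psi>_def using C0 by (metis mult_left_mono)
      moreover have "C * cosh (k * r) = Z" unfolding C_def
        using cosh_real_pos[of "k*r"] by simp
      moreover have "z ym \<le> Z" using zle ym(1) cube unfolding Q_def by auto
      ultimately show False using wpos unfolding w_def by simp
    qed
    have boxS: "box (x0 - r *\<^sub>R One) (x0 + r *\<^sub>R One) \<subseteq> S"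
      using cube box_subset_cbox by blast
    have ymS: "ym \<in> S" using inbox boxS by blast
    have hn: "(H ym i - H\<psi> ym i) \<bullet> i \<le> 0" for i
    proof (rule hess_max[of "box (x0 - r *\<^sub>R One) (x0 + r *\<^sub>R One)" ym w "\<lambda>y. G y - G\<psi> y"])
      show "open (box (x0 - r *\<^sub>R One) (x0 + r *\<^sub>R One))" by (rule open_box)
      show "ym \<in> box (x0 - r *\<^sub>R One) (x0 + r *\<^sub>R One)" by (rule inbox)
      show "\<And>x. x \<in> box (x0 - r *\<^sub>R One) (x0 + r *\<^sub>R One) \<Longrightarrow> (w has_derivative (\<lambda>v. (G x - G\<psi> x) \<bullet> v)) (at x)"
        using dw boxS by blast
      show "((\<lambda>y. G y - G\<psi> y) has_derivative (\<lambda>v. H ym v - H\<psi> ym v)) (at ym)" using dGw[OF ymS] .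
      show "\<And>x. x \<in> box (x0 - r *\<^sub>R One) (x0 + r *\<^sub>R One) \<Longrightarrow> w x \<le> w ym"
        using ym(2) box_subset_cbox unfolding Q_def by blast
    qed
    have "laplacian_of H ym - laplacian_of H\<psi> ym = (\<Sum>i\<in>Basis. (H ym i - H\<psi> ym i) \<bullet> i)"
      unfolding laplacian_of_def by (simp add: inner_diff_left sum_subtractf)
    also have "\<dots> \<le> 0" using hn by (intro sum_nonpos) auto
    finally have "laplacian_of H ym \<le> k\<^sup>2 * \<psi> ym" using lap\<psi> by simp
    moreover have "z ym > \<psi> ym" using wpos unfolding w_def by simp
    moreover have "z ym > 0" using \<psi>0[of ym] calculation by linarith
    moreover have "k\<^sup>2 > 0" using k by simp
    ultimately have "laplacian_of H ym < k\<^sup>2 * z ym" by (smt (verit) mult_strict_left_mono)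
    thus False using lap[OF ymS \<open>z ym > 0\<close>] by simp
  qed
  moreover have "\<psi> x0 = Z * DIM('a) / cosh (k * r)" unfolding \<psi>_def C_def by simp
  ultimately show ?thesis unfolding w_def by simp
qed

lemma within_closure_at:
  assumes "open \<Omega>" "x \<in> \<Omega>" "(g has_derivative g') (at x within closure \<Omega>)"
  shows "(g has_derivative g') (at x)"
proof -
  have "(g has_derivative g') (at x within \<Omega>)"
    using has_derivative_subset[OF assms(3) closure_subset] .
  thus ?thesis using at_within_open[OF assms(2,1)] by simp
qed

lemma f_zero:
  fixes f f' :: "real \<Rightarrow> real"
  assumes "\<forall>t. (f has_real_derivative f' t) (at t)" "((\<lambda>t. f t / t) \<longlongrightarrow> 0) (at 0)"
  shows "f 0 = 0"
proof -
  have "((\<lambda>t. t * (f t / t)) \<longlongrightarrow> 0 * 0) (at 0)"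
    by (intro tendsto_mult assms(2)) (auto intro: tendsto_ident_at)
  moreover have "eventually (\<lambda>t. t * (f t / t) = f t) (at 0)"
    by (auto simp: eventually_at_filter)
  ultimately have "(f \<longlongrightarrow> 0) (at 0)" using tendsto_cong by force
  moreover have "(f \<longlongrightarrow> f 0) (at 0)" using assms(1) DERIV_isCont isCont_def by blast
  ultimately show ?thesis using tendsto_unique[OF trivial_limit_at] by blast
qed

lemma h_bound:
  fixes f f' \<eta> :: "real \<Rightarrow> real" and \<rho> :: "nat \<Rightarrow> real"
  assumes fd: "\<forall>t. (f has_real_derivative f' t) (at t)" "continuous_on UNIV f'"
    and f1: "((\<lambda>t. f t / t) \<longlongrightarrow> 0) (at 0)"
    and eta: "continuous_on UNIV \<eta>"
    and rho: "\<forall>n. 1/2 \<le> \<rho> n \<and> \<rho> n \<le> 1"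
  shows "\<exists>K\<ge>0. \<forall>n t. \<bar>t\<bar> \<le> M \<longrightarrow>
     \<bar>\<rho> n * (\<eta> t * f t) + (1 - \<eta> t) * f t\<bar> \<le> K * \<bar>t\<bar>"
proof -
  have "bounded (\<eta> ` {-M..M})"
    by (intro compact_imp_bounded compact_continuous_image continuous_on_subset[OF eta]) auto
  then obtain B where B: "\<And>t. t \<in> {-M..M} \<Longrightarrow> \<bar>\<eta> t\<bar> \<le> B" unfolding bounded_iff by (metis atLeastAtMost_iff image_eqI real_norm_def)
  have "bounded (f' ` {-M..M})"
    by (intro compact_imp_bounded compact_continuous_image continuous_on_subset[OF fd(2)]) auto
  then obtain L where L: "\<And>t. t \<in> {-M..M} \<Longrightarrow> \<bar>f' t\<bar> \<le> L" unfolding bounded_iff by (metis atLeastAtMost_iff image_eqI real_norm_def)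
  have f0: "f 0 = 0" using f_zero[OF fd(1) f1] .
  have fb: "\<bar>f t\<bar> \<le> \<bar>L\<bar> * \<bar>t\<bar>" if "\<bar>t\<bar> \<le> M" for t
  proof (cases "t = 0")
    case True thus ?thesis using f0 by simp
  next
    case False
    show ?thesis
    proof (cases "t > 0")
      case True
      from MVT2[OF True, of f f'] fd(1) obtain z where z: "0 < z" "z < t" "f t - f 0 = (t - 0) * f' z" by auto
      have "\<bar>f' z\<bar> \<le> \<bar>L\<bar>" using L[of z] z that by auto
      thus ?thesis using z f0 True by (simp add: abs_mult mult.commute mult_left_mono)
    next
      case nt: False
      hence tn: "t < 0" using False by simp
      from MVT2[OF tn, of f f'] fd(1) obtain z where z: "t < z" "z < 0" "f 0 - f t = (0 - t) * f' z" by auto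
      have "\<bar>f' z\<bar> \<le> \<bar>L\<bar>" using L[of z] z that by auto
      moreover have "\<bar>f t\<bar> = \<bar>t\<bar> * \<bar>f' z\<bar>" using z f0 by (simp add: abs_mult)
      ultimately show ?thesis by (metis abs_ge_zero mult.commute mult_left_mono)
    qed
  qed
  show ?thesis
  proof (intro exI[of _ "(1 + \<bar>B\<bar>) * \<bar>L\<bar>"] conjI allI impI)
    show "0 \<le> (1 + \<bar>B\<bar>) * \<bar>L\<bar>" by simp
    fix n t assume t: "\<bar>t\<bar> \<le> M"
    have "\<rho> n * (\<eta> t * f t) + (1 - \<eta> t) * f t = (1 - (1 - \<rho> n) * \<eta> t) * f t" by algebra
    moreover have "\<bar>1 - (1 - \<rho> n) * \<eta> t\<bar> \<le> 1 + \<bar>B\<bar>"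
    proof -
      have "\<bar>(1 - \<rho> n) * \<eta> t\<bar> \<le> 1 * \<bar>B\<bar>"
        unfolding abs_mult using rho[rule_format, of n] B[of t] t
        by (intro mult_mono) (auto simp: abs_le_iff)
      thus ?thesis by linarith
    qed
    ultimately show "\<bar>\<rho> n * (\<eta> t * f t) + (1 - \<eta> t) * f t\<bar> \<le> (1 + \<bar>B\<bar>) * \<bar>L\<bar> * \<bar>t\<bar>"
      using fb[OF t] by (simp add: abs_mult mult.assoc mult_mono)
  qed
qed


theorem lemma4p2:
  fixes \<Omega> :: "'a::euclidean_space set"
    and c a0 p R0 :: real
    and f f' \<eta> :: "real \<Rightarrow> real"
    and \<rho> lam :: "nat \<Rightarrow> real"
    and u :: "nat \<Rightarrow> 'a \<Rightarrow> real"
  assumes dim: "DIM('a) \<ge> 3"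
    and dom: "smooth_bounded_domain \<Omega>"
    and c_pos: "c > 0"
    and f_C1: "\<forall>t. (f has_real_derivative f' t) (at t)" "continuous_on UNIV f'"
    and f_1: "((\<lambda>t. f t / t) \<longlongrightarrow> 0) (at 0)"
    and p_range: "2 + 4 / real DIM('a) < p" "p < 2 * real DIM('a) / (real DIM('a) - 2)"
    and a0_pos: "a0 > 0"
    and f_2: "((\<lambda>t. f t / (\<bar>t\<bar> powr (p - 2) * t)) \<longlongrightarrow> a0) at_infinity"
    and R0: "R0 > 0" "\<forall>t. \<bar>t\<bar> \<ge> R0 \<longrightarrow> f t * t > 0"
    and eta_smooth: "smooth_on \<eta> UNIV"
    and eta_1: "\<forall>t. \<bar>t\<bar> \<ge> R0 + 1 \<longrightarrow> \<eta> t = 1"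
    and eta_0: "\<forall>t. \<bar>t\<bar> < R0 \<longrightarrow> \<eta> t = 0"
    and eta_deriv: "\<forall>t. \<bar>deriv \<eta> t\<bar> \<le> 2"
    and rho: "\<forall>n. 1/2 \<le> \<rho> n \<and> \<rho> n \<le> 1"
    and sol: "\<forall>n. \<exists>G H. C2_closure_with \<Omega> (u n) G H \<and>
               (\<forall>x\<in>\<Omega>. - laplacian_of H x + lam n * u n x
                    = \<rho> n * (\<eta> (u n x) * f (u n x)) + (1 - \<eta> (u n x)) * f (u n x)) \<and>
               (\<forall>x\<in>frontier \<Omega>. G x \<bullet> outward_normal \<Omega> x = 0)"
    and mass: "\<forall>n. integral \<Omega> (\<lambda>x. (u n x)\<^sup>2) = c"
    and lam_inf: "filterlim lam at_top sequentially"
  shows "filterlim (\<lambda>n. SUP x\<in>\<Omega>. \<bar>u n x\<bar>) at_top sequentially"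
proof (rule ccontr)
  let ?S = "\<lambda>n. SUP x\<in>\<Omega>. \<bar>u n x\<bar>"
  assume "\<not> filterlim ?S at_top sequentially"
  then obtain Z where "\<not> eventually (\<lambda>n. Z \<le> ?S n) sequentially"
    unfolding filterlim_at_top by blast
  hence "\<forall>N. \<exists>n\<ge>N. ?S n < Z"
    unfolding eventually_sequentially by (meson not_le)
  hence "infinite {n. ?S n < Z}" unfolding infinite_nat_iff_unbounded_le by auto
  then obtain s :: "nat \<Rightarrow> nat" where s: "strict_mono s" "\<And>k. ?S (s k) < Z" using infinite_enumerate by blast
  define M where "M = max Z 0"
  have M0: "M \<ge> 0" by (simp add: M_def)
  have Om: "open \<Omega>" "bounded \<Omega>" "\<Omega> \<noteq> {}" using dom unfolding smooth_bounded_domain_def by auto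
  obtain G H where GH: "\<And>n. C2_closure_with \<Omega> (u n) (G n) (H n)"
    "\<And>n x. x\<in>\<Omega> \<Longrightarrow> - laplacian_of (H n) x + lam n * u n x
                    = \<rho> n * (\<eta> (u n x) * f (u n x)) + (1 - \<eta> (u n x)) * f (u n x)"
  proof -
    have "\<forall>n. \<exists>GH. C2_closure_with \<Omega> (u n) (fst GH) (snd GH) \<and>
               (\<forall>x\<in>\<Omega>. - laplacian_of (snd GH) x + lam n * u n x
                    = \<rho> n * (\<eta> (u n x) * f (u n x)) + (1 - \<eta> (u n x)) * f (u n x))"
    proof
      fix n
      from sol obtain G H where "C2_closure_with \<Omega> (u n) G H \<and>
               (\<forall>x\<in>\<Omega>. - laplacian_of H x + lam n * u n x
                    = \<rho> n * (\<eta> (u n x) * f (u n x)) + (1 - \<eta> (u n x)) * f (u n x))" by blast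
      thus "\<exists>GH. C2_closure_with \<Omega> (u n) (fst GH) (snd GH) \<and>
               (\<forall>x\<in>\<Omega>. - laplacian_of (snd GH) x + lam n * u n x
                    = \<rho> n * (\<eta> (u n x) * f (u n x)) + (1 - \<eta> (u n x)) * f (u n x))"
        by (intro exI[of _ "(G, H)"]) simp
    qed
    then obtain GH where "\<forall>n. C2_closure_with \<Omega> (u n) (fst (GH n)) (snd (GH n)) \<and>
               (\<forall>x\<in>\<Omega>. - laplacian_of (snd (GH n)) x + lam n * u n x
                    = \<rho> n * (\<eta> (u n x) * f (u n x)) + (1 - \<eta> (u n x)) * f (u n x))" by metis
    thus ?thesis using that[of "\<lambda>n. fst (GH n)" "\<lambda>n. snd (GH n)"] by blast
  qed
  have du: "(u n has_derivative (\<lambda>v. G n y \<bullet> v)) (at y)" if "y \<in> \<Omega>" for n y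
    using GH(1)[of n] that closure_subset Om(1) within_closure_at
    unfolding C2_closure_with_def by blast
  have dG: "(G n has_derivative H n y) (at y)" if "y \<in> \<Omega>" for n y
    using GH(1)[of n] that closure_subset Om(1) within_closure_at
    unfolding C2_closure_with_def by blast
  have bdd: "bdd_above ((\<lambda>x. \<bar>u n x\<bar>) ` \<Omega>)" for n
  proof -
    have "continuous_on (closure \<Omega>) (u n)"
      using GH(1)[of n] unfolding C2_closure_with_def
      by (meson continuous_on_eq_continuous_within has_derivative_continuous)
    hence "compact ((\<lambda>x. \<bar>u n x\<bar>) ` closure \<Omega>)"
      using Om(2) by (intro compact_continuous_image continuous_on_rabs) (auto simp: compact_closure)
    hence "bdd_above ((\<lambda>x. \<bar>u n x\<bar>) ` closure \<Omega>)" by (meson bounded_imp_bdd_above compact_imp_bounded)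
    thus ?thesis by (meson bdd_above_mono closure_subset image_mono)
  qed
  have uM: "\<bar>u (s k) x\<bar> \<le> M" if "x \<in> \<Omega>" for k x
  proof -
    have "\<bar>u (s k) x\<bar> \<le> ?S (s k)" using cSUP_upper[OF that bdd] .
    thus ?thesis using s(2)[of k] by (simp add: M_def)
  qed
  have eta_c: "continuous_on UNIV \<eta>" using eta_smooth unfolding smooth_on_def by (metis Ck.simps(1))
  obtain K where K: "K \<ge> 0" "\<And>n t. \<bar>t\<bar> \<le> M \<Longrightarrow>
     \<bar>\<rho> n * (\<eta> t * f t) + (1 - \<eta> t) * f t\<bar> \<le> K * \<bar>t\<bar>"
    using h_bound[OF f_C1 f_1 eta_c rho, of M] by blast
  have lam_s: "filterlim (\<lambda>k. lam (s k)) at_top sequentially"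
    using filterlim_compose[OF lam_inf filterlim_subseq[OF s(1)]] by (simp add: o_def)
  have pw: "(\<lambda>k. (u (s k) x)\<^sup>2) \<longlonglongrightarrow> 0" if x: "x \<in> \<Omega>" for x
  proof -
    obtain e where e: "e > 0" "ball x e \<subseteq> \<Omega>" using Om(1) x open_contains_ball by blast
    define r where "r = e / (2 * DIM('a))"
    have r: "r > 0" using e by (simp add: r_def)
    have cube: "cbox (x - r *\<^sub>R One) (x + r *\<^sub>R One) \<subseteq> \<Omega>"
    proof
      fix y assume "y \<in> cbox (x - r *\<^sub>R One) (x + r *\<^sub>R One)"
      hence yb: "\<forall>i\<in>Basis. \<bar>(y - x) \<bullet> i\<bar> \<le> r" unfolding mem_cube .
      have "norm (y - x) \<le> (\<Sum>i\<in>Basis. \<bar>(y - x) \<bullet> i\<bar>)" by (rule norm_le_l1)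
      also have "\<dots> \<le> (\<Sum>i\<in>(Basis::'a set). r)" by (rule sum_mono) (use yb in auto)
      also have "\<dots> = e / 2" by (simp add: r_def)
      finally have "dist x y < e" using e by (simp add: dist_norm norm_minus_commute)
      thus "y \<in> \<Omega>" using e by auto
    qed
    define B where "B k = M * DIM('a) / cosh (sqrt (lam (s k) - K) * r)" for k
    have ev: "eventually (\<lambda>k. lam (s k) > K) sequentially"
      using lam_s unfolding filterlim_at_top_dense by blast
    have bnd: "eventually (\<lambda>k. \<bar>u (s k) x\<bar> \<le> B k) sequentially"
      using ev
    proof (rule eventually_mono)
      fix k assume lk: "lam (s k) > K"
      define n where "n = s k"
      define kk where "kk = sqrt (lam n - K)"
      have kk: "kk > 0" using lk by (simp add: kk_def n_def)
      have kk2: "kk\<^sup>2 = lam n - K" using lk by (simp add: kk_def n_def)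
      have hb: "\<bar>\<rho> n * (\<eta> (u n y) * f (u n y)) + (1 - \<eta> (u n y)) * f (u n y)\<bar> \<le> K * \<bar>u n y\<bar>"
        if "y \<in> \<Omega>" for y using K(2) uM[OF that] unfolding n_def by blast
      have c1: "u n x \<le> M * DIM('a) / cosh (kk * r)"
      proof (rule comparison[OF Om(1) r kk M0 cube])
        show "\<And>y. y \<in> \<Omega> \<Longrightarrow> (u n has_derivative (\<lambda>v. G n y \<bullet> v)) (at y)" using du by blast
        show "\<And>y. y \<in> \<Omega> \<Longrightarrow> (G n has_derivative H n y) (at y)" using dG by blast
        show "\<And>y. y \<in> \<Omega> \<Longrightarrow> u n y \<le> M" using uM unfolding n_def by (meson abs_le_D1)
        fix y assume y: "y \<in> \<Omega>" "u n y > 0"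
        have "laplacian_of (H n) y = lam n * u n y - (\<rho> n * (\<eta> (u n y) * f (u n y)) + (1 - \<eta> (u n y)) * f (u n y))"
          using GH(2)[OF y(1), of n] by linarith
        also have "\<dots> \<ge> lam n * u n y - K * u n y" using hb[OF y(1)] y(2) by (simp add: abs_le_iff)
        finally show "kk\<^sup>2 * u n y \<le> laplacian_of (H n) y" using kk2 by (metis add_diff_cancel_left' left_diff_distrib)
      qed
      have c2: "- u n x \<le> M * DIM('a) / cosh (kk * r)"
      proof (rule comparison[OF Om(1) r kk M0 cube, of "\<lambda>y. - u n y" "\<lambda>y. - G n y" "\<lambda>y v. - H n y v"])
        show "\<And>y. y \<in> \<Omega> \<Longrightarrow> ((\<lambda>y. - u n y) has_derivative (\<lambda>v. - G n y \<bullet> v)) (at y)"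
          using du by (auto intro!: derivative_eq_intros)
        show "\<And>y. y \<in> \<Omega> \<Longrightarrow> ((\<lambda>y. - G n y) has_derivative (\<lambda>v. - H n y v)) (at y)"
          using dG by (auto intro!: derivative_eq_intros)
        show "\<And>y. y \<in> \<Omega> \<Longrightarrow> - u n y \<le> M" using uM unfolding n_def by (meson abs_le_D2)
        fix y assume y: "y \<in> \<Omega>" "- u n y > 0"
        have "laplacian_of (\<lambda>y v. - H n y v) y = - laplacian_of (H n) y"
          unfolding laplacian_of_def by (simp add: sum_negf)
        also have "\<dots> = (\<rho> n * (\<eta> (u n y) * f (u n y)) + (1 - \<eta> (u n y)) * f (u n y)) - lam n * u n y"
          using GH(2)[OF y(1), of n] by linarith
        also have "\<dots> \<ge> - K * (- u n y) - lam n * u n y" using hb[OF y(1)] y(2) by (simp add: abs_le_iff)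
        finally show "kk\<^sup>2 * - u n y \<le> laplacian_of (\<lambda>y v. - H n y v) y" using kk2 by (smt (verit) left_diff_distrib mult_minus_right)
      qed
      show "\<bar>u (s k) x\<bar> \<le> B k" using c1 c2 unfolding B_def kk_def n_def by (simp add: abs_le_iff)
    qed
    have "filterlim (\<lambda>k. lam (s k) - K) at_top sequentially"
      by (rule filterlim_tendsto_add_at_top[OF tendsto_const lam_s, of "-K", simplified])
    hence "filterlim (\<lambda>k. sqrt (lam (s k) - K)) at_top sequentially"
      using filterlim_compose[OF sqrt_at_top] by blast
    hence "filterlim (\<lambda>k. r * sqrt (lam (s k) - K)) at_top sequentially"
      by (rule filterlim_tendsto_pos_mult_at_top[OF tendsto_const r])
    hence "filterlim (\<lambda>k. sqrt (lam (s k) - K) * r) at_top sequentially"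
      by (simp add: mult.commute)
    hence "filterlim (\<lambda>k. cosh (sqrt (lam (s k) - K) * r)) at_top sequentially"
      using filterlim_compose[OF cosh_real_at_top] by blast
    hence "B \<longlonglongrightarrow> 0" unfolding B_def
      by (intro tendsto_divide_0[OF tendsto_const] filterlim_at_top_imp_at_infinity)
    hence B2: "(\<lambda>k. (B k)\<^sup>2) \<longlonglongrightarrow> 0" using tendsto_power[of B 0 sequentially 2] by simp
    have "eventually (\<lambda>k. norm ((u (s k) x)\<^sup>2) \<le> (B k)\<^sup>2) sequentially"
      using bnd
    proof (rule eventually_mono)
      fix k assume "\<bar>u (s k) x\<bar> \<le> B k"
      hence "\<bar>u (s k) x\<bar>\<^sup>2 \<le> (B k)\<^sup>2" by (intro power_mono) auto
      thus "norm ((u (s k) x)\<^sup>2) \<le> (B k)\<^sup>2" by simp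
    qed
    thus ?thesis by (rule Lim_null_comparison[OF _ B2])
  qed
  have intg: "(\<lambda>x. (u (s k) x)\<^sup>2) integrable_on \<Omega>" for k
  proof (rule ccontr)
    assume "\<not> (\<lambda>x. (u (s k) x)\<^sup>2) integrable_on \<Omega>"
    hence "integral \<Omega> (\<lambda>x. (u (s k) x)\<^sup>2) = 0" by (rule not_integrable_integral)
    thus False using mass c_pos by simp
  qed
  have hint: "(\<lambda>x. M\<^sup>2) integrable_on \<Omega>"
    by (rule integrable_on_const[OF lmeasurable_open[OF Om(2) Om(1)]])
  have le: "norm ((u (s k) x)\<^sup>2) \<le> M\<^sup>2" if "x \<in> \<Omega>" for k x
  proof -
    have "\<bar>u (s k) x\<bar>\<^sup>2 \<le> M\<^sup>2" using uM[OF that, of k] by (intro power_mono) auto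
    thus ?thesis by simp
  qed
  have "(\<lambda>k. integral \<Omega> (\<lambda>x. (u (s k) x)\<^sup>2)) \<longlonglongrightarrow> integral \<Omega> (\<lambda>x. 0)"
    by (rule dominated_convergence(2)[OF intg hint le pw])
  hence "(\<lambda>k. c) \<longlonglongrightarrow> 0" using mass by simp
  hence "c = 0" using LIMSEQ_unique tendsto_const by blast
  thus False using c_pos by simp
qed

end
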